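(* Let $A$ be a real $n\times n$ matrix, viewed as a linear operator on $H=\mathbb{R}^n$ with the Euclidean inner product $\langle\cdot,\cdot\rangle$ and norm $\|\cdot\|$, and let $\lambda$ be a real eigenvalue of $A$. Suppose there exists a sequence of triples $(\varepsilon_k,\eta_k,u_k)\in\mathbb{R}\times\mathbb{R}\times H$, $k\in\mathbb{N}$, such that for every $k$ $$(A-\lambda I)u_k=\varepsilon_k\big(|u_k|+\eta_k u_k\big),\qquad \varepsilon_k\neq 0,\qquad \|u_k\|=1,$$ and $(\varepsilon_k,\eta_k,u_k)\to(0,\eta_0,u_0)$ as $k\to\infty$ for some $\eta_0\in\mathbb{R}$, $u_0\in H$. Then necessarily $u_0\in\operatorname{Ker}(A-\lambda I)$, $u_0\neq 0$, and $$\langle |u_0|+\eta_0u_0,\,v\rangle=0\quad\text{for all } v\in\operatorname{Ker}(A^{*}-\lambda I),$$ i.e. the orthogonal projection of $|u_0|+\eta_0u_0$ onto $\operatorname{Ker}(A^*-\lambda I)$ is zero.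
   Context: $A^*$ denotes the transpose of $A$. For $u=[u_1,\dots,u_n]^t\in\mathbb{R}^n$, $|u|:=[|u_1|,\dots,|u_n|]^t$ (componentwise absolute value). The equation $(A-\lambda I)u=\varepsilon(|u|+\eta u)$ is the Fučík problem $Au=\alpha u^+-\beta u^-$ rewritten via $\alpha=\varepsilon(\eta+1)+\lambda$, $\beta=\varepsilon(\eta-1)+\lambda$, where $u^\pm$ are the componentwise positive and negative parts ($u_i^+=\max\{u_i,0\}$, $u_i^-=\max\{-u_i,0\}$). *)

theory Defs
  imports "HOL-Analysis.Analysis"
begin

definition vabs :: "real ^ 'n \<Rightarrow> real ^ 'n" where
  "vabs u = (\<chi> i. \<bar>u $ i\<bar>)"

definition mker :: "real ^ 'n ^ 'n \<Rightarrow> (real ^ 'n) set" where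
  "mker M = {v. M *v v = 0}"

end

theory Submission
  imports Defs
begin

lemma vabs_tendsto:
  assumes "u \<longlonglongrightarrow> (u0::real^'n)"
  shows "(\<lambda>k. vabs (u k)) \<longlonglongrightarrow> vabs u0"
  unfolding vabs_def
  by (intro tendsto_vec_lambda tendsto_rabs tendsto_vec_nth assms)

theorem theorem1:
  fixes A :: "real ^ 'n ^ 'n" and lam :: real
    and eps eta :: "nat \<Rightarrow> real" and u :: "nat \<Rightarrow> real ^ 'n"
    and eta0 :: real and u0 :: "real ^ 'n"
  assumes eig: "\<exists>v. v \<noteq> 0 \<and> A *v v = lam *\<^sub>R v"
    and eq: "\<And>k. (A - lam *\<^sub>R mat 1) *v u k = eps k *\<^sub>R (vabs (u k) + eta k *\<^sub>R u k)"
    and nz: "\<And>k. eps k \<noteq> 0"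
    and nrm: "\<And>k. norm (u k) = 1"
    and lim_eps: "eps \<longlonglongrightarrow> 0"
    and lim_eta: "eta \<longlonglongrightarrow> eta0"
    and lim_u: "u \<longlonglongrightarrow> u0"
  shows "u0 \<in> mker (A - lam *\<^sub>R mat 1) \<and> u0 \<noteq> 0 \<and>
         (\<forall>v \<in> mker (transpose A - lam *\<^sub>R mat 1). (vabs u0 + eta0 *\<^sub>R u0) \<bullet> v = 0)"
proof -
  define B where "B = A - lam *\<^sub>R mat 1"
  define w where "w k = vabs (u k) + eta k *\<^sub>R u k" for k
  have wl: "w \<longlonglongrightarrow> vabs u0 + eta0 *\<^sub>R u0"
    unfolding w_def by (intro tendsto_intros vabs_tendsto lim_u lim_eta)
  have l1: "(\<lambda>k. B *v u k) \<longlonglongrightarrow> B *v u0"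
    using bounded_linear.tendsto[OF matrix_vector_mul_bounded_linear lim_u] by blast
  have l2: "(\<lambda>k. B *v u k) \<longlonglongrightarrow> 0"
  proof -
    have "(\<lambda>k. eps k *\<^sub>R w k) \<longlonglongrightarrow> 0 *\<^sub>R (vabs u0 + eta0 *\<^sub>R u0)"
      by (intro tendsto_intros lim_eps wl)
    then show ?thesis using eq unfolding B_def w_def by simp
  qed
  have k1: "B *v u0 = 0" using LIMSEQ_unique[OF l1 l2] .
  have "(\<lambda>k. norm (u k)) \<longlonglongrightarrow> norm u0" by (intro tendsto_intros lim_u)
  then have "norm u0 = 1" using nrm LIMSEQ_unique[of "\<lambda>k. 1" 1 "norm u0"] by simp
  then have k2: "u0 \<noteq> 0" by auto
  have tr: "transpose A - lam *\<^sub>R mat 1 = transpose B"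
    unfolding B_def by (simp add: vec_eq_iff transpose_def mat_def)
  have k3: "(vabs u0 + eta0 *\<^sub>R u0) \<bullet> v = 0" if "transpose B *v v = 0" for v
  proof -
    have "(B *v u k) \<bullet> v = 0" for k
    proof -
      have "(B *v u k) \<bullet> v = v \<bullet> (B *v u k)" by (simp add: inner_commute)
      also have "\<dots> = (v v* B) \<bullet> u k" by (simp add: dot_lmul_matrix)
      also have "v v* B = transpose B *v v" by simp
      finally show ?thesis using that by simp
    qed
    then have "w k \<bullet> v = 0" for k
    proof -
      have "eps k * (w k \<bullet> v) = 0"
        using \<open>(B *v u k) \<bullet> v = 0\<close> eq[of k] unfolding B_def w_def by simp
      then show ?thesis using nz[of k] by simp
    qed
    then have "(\<lambda>k. w k \<bullet> v) \<longlonglongrightarrow> 0" by simp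
    moreover have "(\<lambda>k. w k \<bullet> v) \<longlonglongrightarrow> (vabs u0 + eta0 *\<^sub>R u0) \<bullet> v"
      by (intro tendsto_intros wl)
    ultimately show ?thesis using LIMSEQ_unique by blast
  qed
  show ?thesis using k1 k2 k3 tr unfolding mker_def B_def by auto
qed

end
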